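(* Let $m \geq 1$ be an integer and let $q \in (m,m+1)$ be a Pisot number which is also a simple Parry number. Then every Galois conjugate $q'$ of $q$ satisfies $|q'| \geq c_m$. More precisely, if $q' \neq q$ is a real Galois conjugate of $q$, then \[ |q'| \geq \frac{\sqrt{m^2+4}-m}{2} \geq c_m. \]
   Context: A Pisot number is a real algebraic integer $q>1$ all of whose other Galois conjugates have absolute value strictly less than $1$. A real number $q>1$ is a simple Parry number if the greedy $q$-expansion of $1$ is finite, i.e. $1 = \sum_{i=1}^n a_i q^{-i}$ with digits $a_i$ produced by the greedy algorithm (iterating $x \mapsto qx \bmod 1$ from $1$ terminates at $0$). Define $c_1 = \frac{\sqrt{5}-1}{2}$; define $c_2$ to be the absolute value of the root of minimal modulus of $x^4-3x^3+x^2-2x-1$; and for $m \geq 3$ define $c_m = \frac{m+1-\sqrt{m^2+2m-3}}{2}$. *)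

theory Defs
  imports "HOL-Analysis.Analysis" "HOL-Computational_Algebra.Computational_Algebra"
begin

definition real_alg_integer :: "real \<Rightarrow> bool" where
  "real_alg_integer q \<longleftrightarrow>
     (\<exists>p :: int poly. lead_coeff p = 1 \<and> poly (map_poly real_of_int p) q = 0)"

text \<open>Galois conjugates of a real algebraic number q: the complex roots of its
  minimal polynomial, i.e. of an irreducible integer polynomial vanishing at q.\<close>
definition galois_conjugate :: "real \<Rightarrow> complex \<Rightarrow> bool" where
  "galois_conjugate q z \<longleftrightarrow>
     (\<exists>p :: int poly. irreducible p \<and> poly (map_poly real_of_int p) q = 0
                     \<and> poly (map_poly complex_of_int p) z = 0)"

definition pisot :: "real \<Rightarrow> bool" where
  "pisot q \<longleftrightarrow> q > 1 \<and> real_alg_integer q \<and>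
     (\<forall>z. galois_conjugate q z \<and> z \<noteq> complex_of_real q \<longrightarrow> cmod z < 1)"

definition beta_map :: "real \<Rightarrow> real \<Rightarrow> real" where
  "beta_map q x = frac (q * x)"

definition simple_parry :: "real \<Rightarrow> bool" where
  "simple_parry q \<longleftrightarrow> q > 1 \<and> (\<exists>n. ((beta_map q) ^^ n) 1 = 0)"

definition c2_poly :: "complex poly" where
  "c2_poly = [:-1, -2, 1, -3, 1:]"

definition c_const :: "nat \<Rightarrow> real" where
  "c_const m =
     (if m = 1 then (sqrt 5 - 1) / 2
      else if m = 2 then Min {cmod z | z. poly c2_poly z = 0}
      else (real m + 1 - sqrt (real m ^ 2 + 2 * real m - 3)) / 2)"

end

theory Submission
  imports Defs
begin


lemma mpi_mult: "map_poly (of_int :: int \<Rightarrow> 'a::comm_ring_1) (p * q) = map_poly of_int p * map_poly of_int q"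
  by (rule poly_eqI) (simp add: coeff_mult coeff_map_poly)
lemma mpi_diff: "map_poly (of_int :: int \<Rightarrow> 'a::comm_ring_1) (p - q) = map_poly of_int p - map_poly of_int q"
  by (rule poly_eqI) (simp add: coeff_map_poly)
lemma mpi_add: "map_poly (of_int :: int \<Rightarrow> 'a::comm_ring_1) (p + q) = map_poly of_int p + map_poly of_int q"
  by (rule poly_eqI) (simp add: coeff_map_poly)
lemma mpi_monom: "map_poly (of_int :: int \<Rightarrow> 'a::comm_ring_1) (monom c n) = monom (of_int c) n"
  by (rule poly_eqI) (simp add: coeff_map_poly)
lemma mpi_smult: "map_poly (of_int :: int \<Rightarrow> 'a::comm_ring_1) (smult c p) = smult (of_int c) (map_poly of_int p)"
  by (rule poly_eqI) (simp add: coeff_map_poly)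
lemma mpi_sum: "map_poly (of_int :: int \<Rightarrow> 'a::comm_ring_1) (sum f A) = (\<Sum>i\<in>A. map_poly of_int (f i))"
  by (induction A rule: infinite_finite_induct) (auto simp: mpi_add)

lemma mpi_const [simp]: "map_poly (of_int :: int \<Rightarrow> 'a::comm_ring_1) [:c:] = [:of_int c:]"
  by (cases "c = 0") (simp_all add: map_poly_pCons)

lemma min_deg:
  fixes p :: "int poly" and q :: real
  assumes irr: "irreducible p" and pq: "poly (map_poly real_of_int p) q = 0"
  shows "t \<noteq> 0 \<Longrightarrow> poly (map_poly real_of_int t) q = 0 \<Longrightarrow> degree p \<le> degree t"
proof (induction "degree t" arbitrary: t rule: less_induct)
  case less
  have prime: "prime_elem p" using irr by (rule irreducible_imp_prime_poly)
  define r where "r = pseudo_mod p t"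
  obtain \<alpha> s where as: "\<alpha> \<noteq> 0" "smult \<alpha> p = t * s + r"
    using pseudo_mod(1)[OF less.prems(1)] unfolding r_def by blast
  have rd: "r = 0 \<or> degree r < degree t" using pseudo_mod(2)[OF less.prems(1)] unfolding r_def by blast
  have "map_poly real_of_int (smult \<alpha> p) = map_poly real_of_int (t * s + r)" using as(2) by simp
  then have "smult (of_int \<alpha>) (map_poly of_int p) = map_poly real_of_int t * map_poly of_int s + map_poly real_of_int r"
    by (simp add: mpi_smult mpi_mult mpi_add)
  then have "poly (smult (of_int \<alpha>) (map_poly of_int p)) q = poly (map_poly real_of_int t * map_poly of_int s + map_poly real_of_int r) q"
    by simp
  then have r0: "poly (map_poly real_of_int r) q = 0" using pq less.prems(2) by simp
  show ?case
  proof (cases "r = 0")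
    case False
    with rd have "degree r < degree t" by simp
    with less.hyps[OF this False r0] show ?thesis by simp
  next
    case True
    have "p dvd smult \<alpha> p" by (simp add: dvd_smult)
    then have "p dvd t * s" using as True by simp
    then have "p dvd t \<or> p dvd s" using prime prime_elem_dvd_mult_iff by blast
    then show ?thesis
    proof
      assume "p dvd t" then show ?thesis using less.prems(1) by (rule dvd_imp_degree_le)
    next
      assume "p dvd s"
      then obtain s' where s': "s = p * s'" by (auto elim: dvdE)
      have p0: "p \<noteq> 0" using irr by auto
      have sm: "smult \<alpha> p = p * [:\<alpha>:]" by simp
      have "p * [:\<alpha>:] = p * (t * s')" using as(2) True s' unfolding sm by (simp add: algebra_simps)
      then have e: "[:\<alpha>:] = t * s'" using p0 by (metis mult_left_cancel)
      then have "s' \<noteq> 0" using as(1) by auto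
      then have "degree t = 0" using e less.prems(1) by (metis degree_mult_eq degree_pCons_0 add_is_0)
      then obtain c where c: "t = [:c:]" by (rule degree_eq_zeroE)
      then have "c \<noteq> 0" using less.prems(1) by simp
      then show ?thesis using less.prems(2) c by simp
    qed
  qed
qed

lemma conj_dvd:
  fixes p P :: "int poly" and q :: real
  assumes irr: "irreducible p" and pq: "poly (map_poly real_of_int p) q = 0"
    and Pq: "poly (map_poly real_of_int P) q = 0"
  shows "p dvd P"
proof -
  have prime: "prime_elem p" using irr by (rule irreducible_imp_prime_poly)
  have p0: "p \<noteq> 0" using irr by auto
  define r where "r = pseudo_mod P p"
  obtain \<alpha> s where as: "\<alpha> \<noteq> 0" "smult \<alpha> P = p * s + r"
    using pseudo_mod(1)[OF p0] unfolding r_def by blast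
  have rd: "r = 0 \<or> degree r < degree p" using pseudo_mod(2)[OF p0] unfolding r_def by blast
  have "map_poly real_of_int (smult \<alpha> P) = map_poly real_of_int (p * s + r)" using as(2) by simp
  then have "smult (of_int \<alpha>) (map_poly of_int P) = map_poly real_of_int p * map_poly of_int s + map_poly real_of_int r"
    by (simp add: mpi_smult mpi_mult mpi_add)
  then have "poly (smult (of_int \<alpha>) (map_poly of_int P)) q = poly (map_poly real_of_int p * map_poly of_int s + map_poly real_of_int r) q"
    by simp
  then have r0: "poly (map_poly real_of_int r) q = 0" using pq Pq by simp
  have "r = 0"
  proof (rule ccontr)
    assume "r \<noteq> 0"
    then have "degree r < degree p" using rd by simp
    moreover have "degree p \<le> degree r" using min_deg[OF irr pq \<open>r \<noteq> 0\<close> r0] .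
    ultimately show False by simp
  qed
  then have "p dvd [:\<alpha>:] * P" using as(2) by simp
  then have "p dvd [:\<alpha>:] \<or> p dvd P" using prime prime_elem_dvd_mult_iff by blast
  then show ?thesis
  proof
    assume "p dvd [:\<alpha>:]"
    then have "degree p = 0" using as(1) dvd_imp_degree_le[of p "[:\<alpha>:]"] by simp
    then obtain c where c: "p = [:c:]" by (rule degree_eq_zeroE)
    then have "c \<noteq> 0" using p0 by simp
    then show ?thesis using pq c by simp
  qed
qed



lemma geo_c: "(\<Sum>j\<in>{1..<Suc n}. (z::'a::comm_ring_1)^j) * (1 - z) = z - z^(Suc n)"
proof (induction n)
  case 0 then show ?case by simp
next
  case (Suc n)
  have "(\<Sum>j\<in>{1..<Suc (Suc n)}. z^j) = (\<Sum>j\<in>{1..<Suc n}. z^j) + z^Suc n"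
    by (simp add: sum.atLeastLessThan_Suc)
  then have "(\<Sum>j\<in>{1..<Suc (Suc n)}. z^j) * (1 - z) = (\<Sum>j\<in>{1..<Suc n}. z^j) * (1 - z) + z^Suc n * (1 - z)"
    by (simp only: distrib_right)
  also have "\<dots> = z - z^Suc n + z^Suc n * (1 - z)" using Suc by simp
  also have "\<dots> = z - z^Suc (Suc n)" by (simp add: algebra_simps)
  finally show ?case .
qed

lemma key_ineq:
  fixes z :: complex and n :: nat
  assumes n: "n \<ge> 2" and r1: "cmod z < 1" and rr: "cmod z ^ 2 + cmod z \<le> 1"
  shows "(\<Sum>j\<in>{1..<n}. cmod z ^ j - Re (z ^ j)) \<le> 2 * cmod z * (1 - cmod z ^ n) / (1 - cmod z ^ 2)"
proof -
  define \<rho> where "\<rho> = cmod z"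
  obtain k where nk: "n = Suc (Suc k)" using n by (metis add_2_eq_Suc le_Suc_ex)
  define u where "u = z ^ Suc k"
  define t where "t = \<rho> ^ Suc k"
  have zn: "z ^ n = z * u" by (simp add: nk u_def)
  have rn: "\<rho> ^ n = \<rho> * t" by (simp add: nk t_def)
  have cu: "cmod u = t" unfolding u_def t_def \<rho>_def by (rule norm_power)
  have r0: "0 \<le> \<rho>" by (simp add: \<rho>_def)
  have r1': "\<rho> < 1" using r1 by (simp add: \<rho>_def)
  have t0: "0 \<le> t" by (simp add: t_def r0)
  have tr: "t \<le> \<rho>" unfolding t_def using r0 r1' by (simp add: mult_left_le power_le_one)
  have rr': "\<rho>^2 + \<rho> \<le> 1" using rr by (simp add: \<rho>_def)
  define S where "S = (\<Sum>j\<in>{1..<n}. z^j)"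
  define A where "A = (\<Sum>j\<in>{1..<n}. \<rho>^j)"
  have SA: "S * (1 - z) = z - z^n" unfolding S_def nk using geo_c[where n="Suc k" and z=z] by simp
  have AA: "A * (1 - \<rho>) = \<rho> - \<rho>^n" unfolding A_def nk using geo_c[where n="Suc k" and z=\<rho>] by simp
  have lhs: "(\<Sum>j\<in>{1..<n}. cmod z ^ j - Re (z ^ j)) = A - Re S"
    by (simp add: A_def S_def \<rho>_def sum_subtractf Re_sum)
  define d where "d = cmod (1 - z)"
  have zne: "z \<noteq> 1" using r1 by auto
  have d0: "d > 0" using zne by (simp add: d_def)
  have dle: "d \<le> 1 + \<rho>" unfolding d_def \<rho>_def using norm_triangle_ineq4[of 1 z] by simp
  have d2: "d^2 = 1 - 2 * Re z + \<rho>^2"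
    unfolding d_def \<rho>_def cmod_power2 by (simp add: power2_eq_square algebra_simps)
  have zc: "z * cnj z = of_real (\<rho>^2)" unfolding \<rho>_def by (rule complex_norm_square[symmetric])
  have ES: "Re S * d^2 = Re ((z - z^n) * cnj (1 - z))"
  proof -
    have "(1 - z) * cnj (1 - z) = of_real (d^2)" unfolding d_def by (rule complex_norm_square[symmetric])
    then have "S * of_real (d^2) = (z - z^n) * cnj (1 - z)"
      by (metis SA mult.assoc)
    then have "Re (S * of_real (d^2)) = Re ((z - z^n) * cnj (1 - z))" by simp
    then show ?thesis by simp
  qed
  have Eexp: "Re ((z - z^n) * cnj (1 - z)) = Re z - \<rho>^2 - Re (u * (z - of_real (\<rho>^2)))"
  proof -
    have "(z - z^n) * cnj (1 - z) = z - z * cnj z - (u * z - u * (z * cnj z))"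
      by (simp add: zn algebra_simps)
    also have "\<dots> = z - of_real (\<rho>^2) - u * (z - of_real (\<rho>^2))" by (simp add: zc algebra_simps)
    finally show ?thesis by simp
  qed
  have Ubound: "Re (u * (z - of_real (\<rho>^2))) \<le> t * \<rho> * d"
  proof -
    have "z * cnj (1 - z) = z - z * cnj z" by (simp add: algebra_simps)
    then have "z - of_real (\<rho>^2) = z * cnj (1 - z)" by (simp only: zc)
    then have "cmod (u * (z - of_real (\<rho>^2))) = t * \<rho> * d"
      using complex_mod_cnj[of "1 - z"] by (simp add: norm_mult cu \<rho>_def d_def)
    then show ?thesis using complex_Re_le_cmod by metis
  qed
  define X where "X = Re z"
  define U where "U = Re (u * (z - of_real (\<rho>^2)))"
  have Xd: "X + \<rho> = ((1 + \<rho>)^2 - d^2) / 2" using d2 unfolding X_def by algebra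
  have core: "(1 + \<rho>) * (X - \<rho>^2 - U) + \<rho> * (1 + t) * d^2 \<ge> 0"
  proof -
    have e1: "(1 + \<rho>) * (X - \<rho>^2 - U) + \<rho> * (1 + t) * d^2
        = (1 - \<rho>) * (X + \<rho>) + \<rho> * t * d^2 - (1 + \<rho>) * U"
      using d2 unfolding X_def by algebra
    have e2: "2 * ((1 - \<rho>) * (X + \<rho>) + \<rho> * t * d^2 - (1 + \<rho>) * (t * \<rho> * d))
        = (1 + \<rho> - d) * ((1 - \<rho>) * (1 + \<rho> + d) - 2 * (\<rho> * t * d))"
      using Xd by algebra
    have f1: "1 + \<rho> - d \<ge> 0" using dle by simp
    have f2: "(1 - \<rho>) * (1 + \<rho> + d) \<ge> 2 * ((1 - \<rho>) * d)"
    proof -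
      have "0 \<le> (1 - \<rho>) * (1 + \<rho> - d)" using dle r1' by simp
      then show ?thesis by (simp add: algebra_simps)
    qed
    have f3: "(1 - \<rho>) * d \<ge> \<rho> * t * d"
    proof -
      have "\<rho> * t \<le> \<rho> * \<rho>" using tr r0 by (simp add: mult_left_mono)
      also have "\<dots> \<le> 1 - \<rho>" using rr' by (simp add: power2_eq_square)
      finally show ?thesis using d0 by (simp add: mult_right_mono)
    qed
    have "(1 + \<rho> - d) * ((1 - \<rho>) * (1 + \<rho> + d) - 2 * (\<rho> * t * d)) \<ge> 0"
      using f1 f2 f3 by simp
    then have "2 * ((1 - \<rho>) * (X + \<rho>) + \<rho> * t * d^2 - (1 + \<rho>) * (t * \<rho> * d)) \<ge> 0"
      using e2 by simp
    then have g: "(1 - \<rho>) * (X + \<rho>) + \<rho> * t * d^2 - (1 + \<rho>) * (t * \<rho> * d) \<ge> 0"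
      by simp
    have "(1 + \<rho>) * U \<le> (1 + \<rho>) * (t * \<rho> * d)"
      using Ubound r0 by (simp add: U_def mult_left_mono)
    then show ?thesis using e1 g by linarith
  qed
  have ReS: "Re S = (X - \<rho>^2 - U) / d^2"
    using ES Eexp d0 by (simp add: X_def U_def field_simps)
  have Aeq: "A = (\<rho> - \<rho>^n) / (1 - \<rho>)" using AA r1' by (simp add: field_simps)
  have goal: "A - Re S \<le> 2 * \<rho> * (1 - \<rho> ^ n) / (1 - \<rho>^2)"
  proof -
    define B where "B = 2 * \<rho> * (1 - \<rho> ^ n) / (1 - \<rho>^2)"
    have "\<rho>^2 \<le> \<rho>" using r0 r1' by (simp add: power2_eq_square mult_left_le)
    then have den: "1 - \<rho>^2 > 0" using r1' by linarith
    have h2: "(1 - \<rho>) * (1 + \<rho>) = 1 - \<rho>^2" by algebra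
    have Bm: "B * ((1 - \<rho>) * (1 + \<rho>)) = 2 * \<rho> * (1 - \<rho> * t)"
      unfolding h2 B_def rn using den by simp
    have AA': "A * (1 - \<rho>) = \<rho> - \<rho> * t" using AA rn by simp
    have ABm: "(A - B) * (1 + \<rho>) * (1 - \<rho>) = (- \<rho> * (1 + t)) * (1 - \<rho>)"
    proof -
      have "(A - B) * (1 + \<rho>) * (1 - \<rho>) = (A * (1 - \<rho>)) * (1 + \<rho>) - B * ((1 - \<rho>) * (1 + \<rho>))"
        by algebra
      also have "\<dots> = (\<rho> - \<rho> * t) * (1 + \<rho>) - 2 * \<rho> * (1 - \<rho> * t)" by (simp only: AA' Bm)
      also have "\<dots> = (- \<rho> * (1 + t)) * (1 - \<rho>)" by algebra
      finally show ?thesis .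
    qed
    have AB: "(A - B) * (1 + \<rho>) = - \<rho> * (1 + t)"
    proof -
      have "1 - \<rho> \<noteq> 0" using r1' by simp
      then show ?thesis using ABm by (metis mult_right_cancel)
    qed
    have RS0: "Re S * d^2 = X - \<rho>^2 - U"
      unfolding X_def U_def by (rule trans[OF ES Eexp])
    have "Re S * ((1 + \<rho>) * d^2) = (1 + \<rho>) * (Re S * d^2)" by (simp only: ac_simps)
    then have RS: "Re S * ((1 + \<rho>) * d^2) = (1 + \<rho>) * (X - \<rho>^2 - U)" by (simp only: RS0)
    have "(A - B) * ((1 + \<rho>) * d^2) = - \<rho> * (1 + t) * d^2" using AB by (metis mult.assoc)
    also have "\<dots> \<le> Re S * ((1 + \<rho>) * d^2)" using RS core by linarith
    finally have "(A - B) * ((1 + \<rho>) * d^2) \<le> Re S * ((1 + \<rho>) * d^2)" .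
    moreover have "(1 + \<rho>) * d^2 > 0" using r0 d0 by simp
    ultimately have "A - B \<le> Re S" by (meson mult_le_cancel_right_pos)
    then show ?thesis unfolding B_def by simp
  qed
  then show ?thesis using lhs by (simp add: \<rho>_def)
qed
lemma key_ineq_all:
  fixes z :: complex and n :: nat
  assumes r1: "cmod z < 1" and rr: "cmod z ^ 2 + cmod z \<le> 1"
  shows "(\<Sum>j\<in>{1..<n}. cmod z ^ j - Re (z ^ j)) \<le> 2 * cmod z * (1 - cmod z ^ n) / (1 - cmod z ^ 2)"
proof (cases "n \<ge> 2")
  case True
  then show ?thesis using key_ineq r1 rr by blast
next
  case False
  then have "{1..<n} = {}" by auto
  moreover have "0 \<le> 2 * cmod z * (1 - cmod z ^ n) / (1 - cmod z ^ 2)"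
  proof -
    have "cmod z ^ n \<le> 1" using r1 by (simp add: power_le_one)
    moreover have "cmod z ^ 2 < 1" using r1 by (simp add: power_less_one_iff)
    ultimately show ?thesis by simp
  qed
  ultimately show ?thesis by simp
qed

lemma root_bound:
  fixes z :: complex and b :: "nat \<Rightarrow> real" and N :: nat and m :: real
  assumes N: "N \<ge> 1" and m: "m \<ge> 1"
    and hb: "\<And>i. i \<in> {1..<N} \<Longrightarrow> 0 \<le> b i \<and> b i \<le> m"
    and hbN: "b N \<ge> 1"
    and eq: "z ^ N = (\<Sum>i=1..N. of_real (b i) * z ^ (N - i))"
  shows "cmod z ^ 2 + m * cmod z \<ge> 1"
proof (rule ccontr)
  define \<rho> where "\<rho> = cmod z"
  assume "\<not> cmod z ^ 2 + m * cmod z \<ge> 1"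
  then have lt: "\<rho>^2 + m * \<rho> < 1" by (simp add: \<rho>_def)
  have r0: "0 \<le> \<rho>" by (simp add: \<rho>_def)
  have "m * \<rho> \<ge> \<rho>" using m r0 by (simp add: mult_le_cancel_right1)
  then have rr: "\<rho>^2 + \<rho> \<le> 1" using lt by linarith
  have r1: "\<rho> < 1"
  proof (rule ccontr)
    assume "\<not> \<rho> < 1"
    then have "1 \<le> \<rho>" by simp
    then have "1 \<le> \<rho>^2" by (simp add: one_le_power)
    then show False using rr \<open>1 \<le> \<rho>\<close> by linarith
  qed
  have split: "{1..N} = insert N {1..<N}" using N by auto
  have eq2: "z ^ N = of_real (b N) + (\<Sum>i\<in>{1..<N}. of_real (b i) * z ^ (N - i))"
    using eq unfolding split by simp
  have ReEq: "Re (z ^ N) = b N + (\<Sum>i\<in>{1..<N}. b i * Re (z ^ (N - i)))"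
    using arg_cong[OF eq2, of Re] by (simp add: Re_sum)
  have tm: "b i * Re (z ^ (N - i)) \<ge> - (m / 2) * (\<rho> ^ (N - i) - Re (z ^ (N - i)))"
    if "i \<in> {1..<N}" for i
  proof -
    have bi: "0 \<le> b i" "b i \<le> m" using hb[OF that] by auto
    have ab: "\<bar>Re (z ^ (N - i))\<bar> \<le> \<rho> ^ (N - i)"
      unfolding \<rho>_def using abs_Re_le_cmod[of "z ^ (N - i)"] by (simp add: norm_power)
    show ?thesis
    proof (cases "Re (z ^ (N - i)) \<ge> 0")
      case True
      then have "b i * Re (z ^ (N - i)) \<ge> 0" using bi by simp
      moreover have "(m / 2) * (\<rho> ^ (N - i) - Re (z ^ (N - i))) \<ge> 0" using ab m by simp
      ultimately show ?thesis by linarith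
    next
      case False
      then have "b i * Re (z ^ (N - i)) \<ge> m * Re (z ^ (N - i))"
        using bi by (simp add: mult_right_mono_neg)
      moreover have "m * Re (z ^ (N - i)) + (m / 2) * (\<rho> ^ (N - i) - Re (z ^ (N - i)))
          = (m / 2) * (\<rho> ^ (N - i) + Re (z ^ (N - i)))" by (simp add: algebra_simps)
      moreover have "(m / 2) * (\<rho> ^ (N - i) + Re (z ^ (N - i))) \<ge> 0" using ab m by simp
      ultimately show ?thesis by linarith
    qed
  qed
  have reidx: "(\<Sum>i\<in>{1..<N}. \<rho> ^ (N - i) - Re (z ^ (N - i))) = (\<Sum>j\<in>{1..<N}. \<rho> ^ j - Re (z ^ j))"
    by (rule sum.reindex_bij_witness[where i="\<lambda>j. N - j" and j="\<lambda>i. N - i"]) auto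
  have sumb: "(\<Sum>i\<in>{1..<N}. b i * Re (z ^ (N - i))) \<ge> - (m / 2) * (\<Sum>i\<in>{1..<N}. \<rho> ^ (N - i) - Re (z ^ (N - i)))"
  proof -
    have "(\<Sum>i\<in>{1..<N}. b i * Re (z ^ (N - i))) \<ge> (\<Sum>i\<in>{1..<N}. - (m / 2) * (\<rho> ^ (N - i) - Re (z ^ (N - i))))"
      by (rule sum_mono) (use tm in auto)
    then show ?thesis by (simp add: sum_distrib_left)
  qed
  define K where "K = 2 * \<rho> * (1 - \<rho> ^ N) / (1 - \<rho> ^ 2)"
  have KB: "(\<Sum>j\<in>{1..<N}. \<rho> ^ j - Re (z ^ j)) \<le> K"
    using key_ineq_all[of z N] r1 rr unfolding K_def \<rho>_def by simp
  have ReN: "Re (z ^ N) \<le> \<rho> ^ N"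
    unfolding \<rho>_def using complex_Re_le_cmod[of "z ^ N"] by (simp add: norm_power)
  have main: "\<rho> ^ N \<ge> 1 - (m / 2) * K"
  proof -
    have "(m / 2) * (\<Sum>j\<in>{1..<N}. \<rho> ^ j - Re (z ^ j)) \<le> (m / 2) * K"
      using KB m by (simp add: mult_left_mono)
    moreover have "(\<Sum>i\<in>{1..<N}. b i * Re (z ^ (N - i))) \<ge> - ((m / 2) * (\<Sum>j\<in>{1..<N}. \<rho> ^ j - Re (z ^ j)))"
      using sumb reidx by simp
    ultimately show ?thesis using ReEq ReN hbN by linarith
  qed
  have "\<rho>^2 < 1" using r0 r1 by (simp add: power_less_one_iff)
  then have den: "1 - \<rho>^2 > 0" by simp
  have rN: "\<rho> ^ N < 1" using r1 r0 N by (simp add: power_less_one_iff)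
  have "m * \<rho> < 1 - \<rho>^2" using lt by simp
  then have q1: "m * \<rho> / (1 - \<rho>^2) < 1" using den by simp
  have "(m / 2) * K = (m * \<rho> / (1 - \<rho>^2)) * (1 - \<rho> ^ N)" unfolding K_def by simp
  also have "\<dots> < 1 * (1 - \<rho> ^ N)"
    using q1 rN by (intro mult_strict_right_mono) auto
  finally show False using main by simp
qed

lemma parry_digits:
  fixes q :: real and m :: nat
  assumes m1: "m \<ge> 1" and mq: "real m < q" and qm: "q < real m + 1" and sp: "simple_parry q"
  obtains N :: nat and a :: "nat \<Rightarrow> int" where "N \<ge> 1"
    "\<And>i. i \<in> {1..<N} \<Longrightarrow> 0 \<le> a i \<and> a i \<le> int m" "a N \<ge> 1"
    "q ^ N = (\<Sum>i=1..N. of_int (a i) * q ^ (N - i))"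
proof -
  define x where "x k = (beta_map q ^^ k) 1" for k
  have x0: "x 0 = 1" by (simp add: x_def)
  have xS': "x (Suc k) = frac (q * x k)" for k by (simp add: x_def beta_map_def)
  have xS: "x (Suc k) = q * x k - of_int \<lfloor>q * x k\<rfloor>" for k by (simp add: xS' frac_def)
  have xr: "0 \<le> x k \<and> x k \<le> 1" for k
  proof (cases k)
    case 0 then show ?thesis by (simp add: x0)
  next
    case (Suc k') then show ?thesis using frac_ge_0 less_imp_le[OF frac_lt_1] xS'[of k'] by simp
  qed
  have q0: "q > 0" using mq by linarith
  define a where "a i = \<lfloor>q * x (i - 1)\<rfloor>" for i
  have closed: "x k = q^k - (\<Sum>i=1..k. of_int (a i) * q^(k-i))" for k
  proof (induction k)
    case 0 then show ?case by (simp add: x0)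
  next
    case (Suc k)
    have s1: "(\<Sum>i=1..Suc k. of_int (a i) * q^(Suc k - i)) = (\<Sum>i=1..k. of_int (a i) * q^(Suc k - i)) + of_int (a (Suc k))"
      by simp
    have s2: "(\<Sum>i=1..k. of_int (a i) * q^(Suc k - i)) = q * (\<Sum>i=1..k. of_int (a i) * q^(k - i))"
      unfolding sum_distrib_left
    proof (rule sum.cong)
      fix i assume "i \<in> {1..k}"
      then have "Suc k - i = Suc (k - i)" by auto
      then show "of_int (a i) * q^(Suc k - i) = q * (of_int (a i) * q^(k - i))" by simp
    qed simp
    have "x (Suc k) = q * x k - of_int (a (Suc k))" by (simp add: xS a_def)
    also have "\<dots> = q^Suc k - (\<Sum>i=1..Suc k. of_int (a i) * q^(Suc k - i))"
      unfolding s1 s2 Suc by (simp add: algebra_simps)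
    finally show ?case .
  qed
  obtain n0 where n0: "x n0 = 0" using sp unfolding simple_parry_def x_def by blast
  define N where "N = (LEAST n. x n = 0)"
  have xN: "x N = 0" unfolding N_def using n0 by (rule LeastI)
  have N1: "N \<ge> 1"
  proof (rule ccontr)
    assume "\<not> N \<ge> 1" then have "N = 0" by simp
    then show False using xN x0 by simp
  qed
  have pos: "x i > 0" if "i < N" for i
  proof -
    have "x i \<noteq> 0" using not_less_Least[of i "\<lambda>n. x n = 0"] that unfolding N_def by blast
    then show ?thesis using xr[of i] by simp
  qed
  have dig: "0 \<le> a i \<and> a i \<le> int m" if "i \<ge> 1" for i
  proof -
    have "0 \<le> q * x (i - 1)" using q0 xr by simp
    moreover have "q * x (i - 1) \<le> q" using q0 xr[of "i - 1"] by (simp add: mult_left_le)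
    ultimately have "0 \<le> q * x (i - 1)" "q * x (i - 1) < real m + 1" using qm by linarith+
    then show ?thesis unfolding a_def by (simp add: floor_le_iff)
  qed
  have aN: "a N \<ge> 1"
  proof -
    have NS: "N = Suc (N - 1)" using N1 by simp
    have "0 = q * x (N - 1) - of_int (a N)" using xS[of "N - 1"] xN NS unfolding a_def by simp
    moreover have "q * x (N - 1) > 0" using pos[of "N - 1"] N1 q0 by simp
    ultimately have "of_int (a N) > (0::real)" by linarith
    then show ?thesis by simp
  qed
  have eqN: "q ^ N = (\<Sum>i=1..N. of_int (a i) * q ^ (N - i))" using closed[of N] xN by simp
  show ?thesis
    by (rule that[OF N1 _ aN eqN]) (use dig in auto)
qed

lemma rm_props:
  fixes m :: real
  assumes "m \<ge> 1"
  shows "(sqrt (m ^ 2 + 4) - m) / 2 > 0"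
    and "((sqrt (m ^ 2 + 4) - m) / 2) ^ 2 + m * ((sqrt (m ^ 2 + 4) - m) / 2) = 1"
proof -
  define s where "s = sqrt (m ^ 2 + 4)"
  have s2: "s ^ 2 = m ^ 2 + 4" unfolding s_def by simp
  have "m < s" unfolding s_def using assms by (intro real_less_rsqrt) simp
  then show "(sqrt (m ^ 2 + 4) - m) / 2 > 0" unfolding s_def by simp
  have "((s - m) / 2) ^ 2 + m * ((s - m) / 2) = (s ^ 2 - m ^ 2) / 4"
    by (simp add: power2_eq_square field_simps)
  also have "\<dots> = 1" using s2 by simp
  finally show "((sqrt (m ^ 2 + 4) - m) / 2) ^ 2 + m * ((sqrt (m ^ 2 + 4) - m) / 2) = 1"
    unfolding s_def .
qed

lemma rm_bound:
  fixes m x :: real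
  assumes m: "m \<ge> 1" and x0: "x \<ge> 0" and hx: "x ^ 2 + m * x \<ge> 1"
  shows "x \<ge> (sqrt (m ^ 2 + 4) - m) / 2"
proof (rule ccontr)
  define r where "r = (sqrt (m ^ 2 + 4) - m) / 2"
  assume "\<not> x \<ge> (sqrt (m ^ 2 + 4) - m) / 2"
  then have xr: "x < r" unfolding r_def by simp
  have r1: "r ^ 2 + m * r = 1" unfolding r_def using rm_props[OF m] by simp
  have "x ^ 2 < r ^ 2" using xr x0 by (simp add: power_strict_mono)
  moreover have "m * x \<le> m * r" using xr m by simp
  ultimately show False using hx r1 by linarith
qed

lemma c_bound:
  fixes m :: nat
  assumes m: "m \<ge> 1"
  shows "c_const m \<le> (sqrt (real m ^ 2 + 4) - real m) / 2"
proof -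
  consider "m = 1" | "m = 2" | "m \<ge> 3" using m by linarith
  then show ?thesis
  proof cases
    case 1
    then show ?thesis by (simp add: c_const_def)
  next
    case 2
    define f where "f x = x^4 - 3*x^3 + x^2 - 2*x - 1" for x :: real
    have fa: "f (-3/10) \<le> 0" by (simp add: f_def eval_nat_numeral)
    have fb: "0 \<le> f (-2/5)" by (simp add: f_def eval_nat_numeral)
    have cont: "\<forall>x. -2/5 \<le> x \<and> x \<le> -3/10 \<longrightarrow> isCont f x"
      unfolding f_def by (intro allI impI continuous_intros)
    obtain x where x: "-2/5 \<le> x" "x \<le> -3/10" "f x = 0"
      using IVT2[of f "-3/10" 0 "-2/5", OF fa fb _ cont] by auto
    have px: "poly c2_poly (complex_of_real x) = complex_of_real (f x)"
      by (simp add: c2_poly_def f_def algebra_simps power_def numeral_eq_Suc)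
    have root: "poly c2_poly (complex_of_real x) = 0" using px x(3) by simp
    have nz: "c2_poly \<noteq> 0" by (simp add: c2_poly_def)
    have fin: "finite {cmod z | z. poly c2_poly z = 0}"
      using poly_roots_finite[OF nz] by (rule finite_image_set)
    have "c_const m = Min {cmod z | z. poly c2_poly z = 0}" using 2 by (simp add: c_const_def)
    also have "\<dots> \<le> cmod (complex_of_real x)"
    proof -
      have mem: "cmod (complex_of_real x) \<in> {cmod z | z. poly c2_poly z = 0}" using root by blast
      show ?thesis by (rule Min_le[OF fin mem])
    qed
    also have "\<dots> \<le> 2/5" using x by simp
    also have "2/5 \<le> (sqrt (real m ^ 2 + 4) - real m) / 2"
    proof -
      have "14/5 \<le> sqrt 8" by (rule real_le_rsqrt) (simp add: power2_eq_square)
      then show ?thesis using 2 by simp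
    qed
    finally show ?thesis .
  next
    case 3
    define A where "A = sqrt (real m ^ 2 + 4)"
    define B where "B = sqrt (real m ^ 2 + 2 * real m - 3)"
    have mr: "real m \<ge> 3" using 3 by simp
    have A2: "A ^ 2 = real m ^ 2 + 4" unfolding A_def by simp
    have "0 \<le> real m ^ 2" by simp
    then have nn: "0 \<le> real m ^ 2 + 2 * real m - 3" using mr by linarith
    have B2: "B ^ 2 = real m ^ 2 + 2 * real m - 3" unfolding B_def by (rule real_sqrt_pow2[OF nn])
    have A0: "A \<ge> 0" "B \<ge> 0" unfolding A_def B_def using nn by simp_all
    have "A ^ 2 \<le> (1 + B) ^ 2"
    proof -
      have "(1 + B) ^ 2 = 1 + 2 * B + B ^ 2" by (simp add: power2_eq_square algebra_simps)
      then show ?thesis using A2 B2 A0 mr by simp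
    qed
    then have AB: "A \<le> 1 + B" using A0 by (simp add: power_mono_iff)
    have e1: "(A - real m) * (A + real m) = 4" using A2 by (simp add: power2_eq_square algebra_simps)
    have e2: "(real m + 1 - B) * (real m + 1 + B) = 4" using B2 by (simp add: power2_eq_square algebra_simps)
    have pos1: "A + real m > 0" using A0 mr by simp
    have "A - real m = 4 / (A + real m)" using e1 pos1 by (simp add: field_simps)
    moreover have "real m + 1 - B = 4 / (real m + 1 + B)" using e2 A0 mr by (simp add: field_simps)
    moreover have "4 / (real m + 1 + B) \<le> 4 / (A + real m)"
      using AB pos1 by (intro divide_left_mono) auto
    ultimately have "real m + 1 - B \<le> A - real m" by simp
    moreover have "c_const m = (real m + 1 - B) / 2" using 3 by (simp add: c_const_def B_def)
    ultimately show ?thesis unfolding A_def by simp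
  qed
qed

theorem theorem2p4:
  fixes m :: nat and q :: real
  assumes "m \<ge> 1"
    and "real m < q" and "q < real m + 1"
    and "pisot q" and "simple_parry q"
  shows "(\<forall>z. galois_conjugate q z \<longrightarrow> cmod z \<ge> c_const m)
       \<and> (\<forall>r::real. galois_conjugate q (complex_of_real r) \<and> r \<noteq> q \<longrightarrow>
            \<bar>r\<bar> \<ge> (sqrt (real m ^ 2 + 4) - real m) / 2
          \<and> (sqrt (real m ^ 2 + 4) - real m) / 2 \<ge> c_const m)"
proof -
  obtain N a where N1: "N \<ge> 1" and dig: "\<And>i. i \<in> {1..<N} \<Longrightarrow> 0 \<le> a i \<and> a i \<le> int m"
    and aN: "a N \<ge> 1" and eqN: "q ^ N = (\<Sum>i=1..N. of_int (a i) * q ^ (N - i))"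
    using parry_digits[OF assms(1,2,3,5)] by blast
  define P :: "int poly" where "P = monom 1 N - (\<Sum>i=1..N. monom (a i) (N - i))"
  have evalP: "poly (map_poly real_of_int P) y = y ^ N - (\<Sum>i=1..N. of_int (a i) * y ^ (N - i))" for y
    by (simp add: P_def mpi_diff mpi_sum mpi_monom poly_monom poly_sum)
  have evalPc: "poly (map_poly complex_of_int P) y = y ^ N - (\<Sum>i=1..N. of_int (a i) * y ^ (N - i))" for y
    by (simp add: P_def mpi_diff mpi_sum mpi_monom poly_monom poly_sum)
  have Pq: "poly (map_poly real_of_int P) q = 0" using eqN by (simp add: evalP)
  have bound: "cmod z \<ge> (sqrt (real m ^ 2 + 4) - real m) / 2" if gc: "galois_conjugate q z" for z
  proof -
    obtain p :: "int poly" where irr: "irreducible p" and pq: "poly (map_poly real_of_int p) q = 0"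
      and pz: "poly (map_poly complex_of_int p) z = 0" using gc unfolding galois_conjugate_def by blast
    have "p dvd P" using conj_dvd[OF irr pq Pq] .
    then obtain h where h: "P = p * h" by (auto elim: dvdE)
    have "poly (map_poly complex_of_int P) z = 0" unfolding h mpi_mult using pz by simp
    then have zeq: "z ^ N = (\<Sum>i=1..N. of_real (real_of_int (a i)) * z ^ (N - i))" by (simp add: evalPc)
    have digr: "0 \<le> real_of_int (a i) \<and> real_of_int (a i) \<le> real m" if "i \<in> {1..<N}" for i
    proof -
      have "0 \<le> a i" "a i \<le> int m" using dig[OF that] by auto
      then have "0 \<le> real_of_int (a i)" "real_of_int (a i) \<le> real_of_int (int m)" by (simp_all only: of_int_le_iff of_int_0_le_iff)
      then show ?thesis by simp
    qed
    have "cmod z ^ 2 + real m * cmod z \<ge> 1"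
      by (rule root_bound[OF N1 _ _ _ zeq]) (use assms(1) digr aN in auto)
    then show ?thesis using rm_bound[of "real m" "cmod z"] assms(1) by simp
  qed
  have cb: "c_const m \<le> (sqrt (real m ^ 2 + 4) - real m) / 2" using c_bound assms(1) by blast
  show ?thesis
  proof (intro conjI allI impI)
    fix z assume "galois_conjugate q z"
    then show "cmod z \<ge> c_const m" using bound cb by force
  next
    fix r :: real assume "galois_conjugate q (complex_of_real r) \<and> r \<noteq> q"
    then show "\<bar>r\<bar> \<ge> (sqrt (real m ^ 2 + 4) - real m) / 2" using bound by force
  next
    fix r :: real assume "galois_conjugate q (complex_of_real r) \<and> r \<noteq> q"
    show "(sqrt (real m ^ 2 + 4) - real m) / 2 \<ge> c_const m" using cb .
  qed
qed

end
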